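(* Let $\underline A=(A_1,\dots,A_m)\in\mathcal C_k(d)$ with $\Theta_k(\underline A)>0$. For $1\le i\le m$ let $R_i:=\mathrm{Range}(A_i)$, let $M_i$ be a real $d\times k$ matrix with $M_i^tM_i=I_k$ and $\mathrm{Range}(M_i)=R_i$, and let $C_{i,j}:=M_i^tA_iM_j\in\mathrm{GL}(k,\mathbb R)$. Define $F:X\times\mathbb R^d\to X\times\mathbb R^d$, $F(\omega,v)=(\sigma\omega,A_{\omega_0}v)$; $\tilde F:X\times\mathbb R^k\to X\times\mathbb R^k$, $\tilde F(\omega,v)=(\sigma\omega,\mathbf C(\omega)v)$ with $\mathbf C(\omega):=C_{\omega_1,\omega_0}$; and $H:X\times\mathbb R^k\to X\times\mathbb R^d$, $H(\omega,v)=(\sigma\omega,M_{\omega_0}v)$. Then $F\circ H=H\circ\tilde F$, and $L_i(F)=L_i(\tilde F)$ for $i=1,\dots,k$.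
   Context: Fix integers $m,d\ge1$, $1\le k\le d$, and a probability vector $\underline p=(p_1,\dots,p_m)$ with all $p_j>0$. Let $X=\{1,\dots,m\}^{\mathbb N}$ with the Bernoulli product measure $\mathbf p=\underline p^{\mathbb N}$ and the left shift $\sigma$. $\mathcal C_k(d)$ is the set of tuples $\underline A=(A_1,\dots,A_m)\in{\rm Mat}(d,\mathbb R)^m$ with $\mathrm{rank}(A_j)=k$ for all $j$, and $\Theta_k(\underline A):=\min\{\|\wedge_k(A_aA_b)\|:1\le a,b\le m\}$ with $\wedge_k$ the $k$-th exterior power (matrix of $k\times k$ minors). For a linear cocycle $G(\omega,v)=(\sigma\omega,\mathbf D(\omega)v)$ on $X\times\mathbb R^N$ with iterates $\mathbf D^n(\omega)=\mathbf D(\sigma^{n-1}\omega)\cdots\mathbf D(\omega)$, its $i$-th Lyapunov exponent $L_i(G)\in[-\infty,\infty)$ is the $\mathbf p$-a.s. constant limit $\lim_n\frac1n\log s_i(\mathbf D^n(\omega))$, $s_1\ge s_2\ge\dots$ being singular values. *)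

theory Defs
  imports "HOL-Analysis.Analysis" "HOL-Probability.Probability"
begin

text \<open>i-th singular value (i >= 1) of a real matrix, via the Courant--Fischer
  max-min formula: s_i(B) = max over i-dimensional subspaces V of min over unit v in V of |Bv|.\<close>
definition sing_val :: "nat \<Rightarrow> real^'n^'m \<Rightarrow> real" where
  "sing_val i B = Sup {Inf {norm (B *v v) | v. v \<in> V \<and> norm v = 1} | V. subspace V \<and> dim V = i}"

definition minor :: "nat \<Rightarrow> real^('d::{finite,linorder})^('d::{finite,linorder}) \<Rightarrow> ('d::{finite,linorder}) set \<Rightarrow> ('d::{finite,linorder}) set \<Rightarrow> real" where
  "minor k B I J = (\<Sum>p | p permutes {..<k}. of_int (sign p) *
      (\<Prod>a<k. B $ (sorted_list_of_set I ! a) $ (sorted_list_of_set J ! (p a))))"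

definition ext_pow :: "nat \<Rightarrow> real^('d::{finite,linorder})^('d::{finite,linorder}) \<Rightarrow> ('d::{finite,linorder}) set \<Rightarrow> ('d::{finite,linorder}) set \<Rightarrow> real" where
  "ext_pow k B = (\<lambda>I J. minor k B I J)"

definition ext_pow_norm :: "nat \<Rightarrow> real^('d::{finite,linorder})^('d::{finite,linorder}) \<Rightarrow> real" where
  "ext_pow_norm k B = sqrt (\<Sum>I\<in>{I. card I = k}. \<Sum>J\<in>{J. card J = k}. (ext_pow k B I J)\<^sup>2)"

definition Theta :: "nat \<Rightarrow> nat \<Rightarrow> (nat \<Rightarrow> real^('d::{finite,linorder})^('d::{finite,linorder})) \<Rightarrow> real" where
  "Theta k m A = Min {ext_pow_norm k (A a ** A b) | a b. a \<in> {1..m} \<and> b \<in> {1..m}}"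

text \<open>X = {1..m}^N realised as nat => nat; the Bernoulli measure is the infinite product of the pmf p
  (with set_pmf p = {1..m}), hence concentrated on {1..m}^N.\<close>
definition bernoulli_measure :: "nat pmf \<Rightarrow> (nat \<Rightarrow> nat) measure" where
  "bernoulli_measure p = PiM UNIV (\<lambda>_. measure_pmf p)"

definition shift :: "(nat \<Rightarrow> nat) \<Rightarrow> (nat \<Rightarrow> nat)" where
  "shift \<omega> = (\<lambda>j. \<omega> (Suc j))"

definition cocycle :: "((nat \<Rightarrow> nat) \<Rightarrow> real^'n^'n) \<Rightarrow> (nat \<Rightarrow> nat) \<times> (real^'n) \<Rightarrow> (nat \<Rightarrow> nat) \<times> (real^'n)" where
  "cocycle D = (\<lambda>(\<omega>, v). (shift \<omega>, D \<omega> *v v))"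

fun cocycle_iter :: "((nat \<Rightarrow> nat) \<Rightarrow> real^'n^'n) \<Rightarrow> nat \<Rightarrow> (nat \<Rightarrow> nat) \<Rightarrow> real^'n^'n" where
  "cocycle_iter D 0 \<omega> = mat 1"
| "cocycle_iter D (Suc n) \<omega> = D ((shift ^^ n) \<omega>) ** cocycle_iter D n \<omega>"

definition ln_ereal :: "real \<Rightarrow> ereal" where
  "ln_ereal x = (if x > 0 then ereal (ln x) else -\<infinity>)"

definition lyap :: "(nat \<Rightarrow> nat) measure \<Rightarrow> ((nat \<Rightarrow> nat) \<Rightarrow> real^'n^'n) \<Rightarrow> nat \<Rightarrow> ereal" where
  "lyap P D i = (THE L. AE \<omega> in P.
      (\<lambda>n. ln_ereal (sing_val i (cocycle_iter D n \<omega>)) / ereal (real n)) \<longlonglongrightarrow> L)"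

definition Cmat :: "(nat \<Rightarrow> real^'d^'d) \<Rightarrow> (nat \<Rightarrow> real^'k^'d) \<Rightarrow> nat \<Rightarrow> nat \<Rightarrow> real^'k^'k" where
  "Cmat A M i j = transpose (M i) ** A i ** M j"

definition Hmap :: "(nat \<Rightarrow> real^'k^'d) \<Rightarrow> (nat \<Rightarrow> nat) \<times> (real^'k) \<Rightarrow> (nat \<Rightarrow> nat) \<times> (real^'d)" where
  "Hmap M = (\<lambda>(\<omega>, v). (shift \<omega>, M (\<omega> 0) *v v))"

end

theory Submission imports Defs "Jordan_Normal_Form.Determinant" begin
hide_const (open) Matrix.mat

lemma leibniz_zero:
  fixes S :: "nat \<Rightarrow> nat \<Rightarrow> real" and v :: "nat \<Rightarrow> real"
  assumes "\<forall>a<k. (\<Sum>b<k. S a b * v b) = 0" and "b0 < k" "v b0 \<noteq> 0"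
  shows "(\<Sum>p | p permutes {..<k}. of_int (sign p) * (\<Prod>a<k. S a (p a))) = 0"
proof -
  define A where "A = Matrix.mat k k (\<lambda>(i,j). S i j)"
  define w where "w = vec k v"
  have A: "A \<in> carrier_mat k k" by (simp add: A_def)
  have w: "w \<in> carrier_vec k" by (simp add: w_def)
  have "w \<noteq> 0\<^sub>v k" using assms(2,3) by (auto simp: w_def vec_eq_iff)
  moreover have "A *\<^sub>v w = 0\<^sub>v k"
    using assms(1) by (auto simp: A_def w_def vec_eq_iff scalar_prod_def lessThan_atLeast0 intro!: sum.cong)
  ultimately have "det A = 0" using det_0_iff_vec_prod_zero[OF A] w by blast
  moreover have "det A = (\<Sum>p | p permutes {..<k}. of_int (sign p) * (\<Prod>a<k. S a (p a)))"
    unfolding det_def'[OF A] by (auto simp: A_def lessThan_atLeast0 intro!: sum.cong prod.cong)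
  ultimately show ?thesis by simp
qed

no_notation Matrix.vec_index (infixl "$" 100)
no_notation Matrix.scalar_prod (infix "\<bullet>" 70)
lemma key_ereal:
  fixes u w :: "nat \<Rightarrow> real"
  assumes K: "\<And>n. \<bar>w (Suc n) - u n\<bar> \<le> K"
  shows "((\<lambda>n. ereal (w n / real n)) \<longlonglongrightarrow> L) \<longleftrightarrow> ((\<lambda>n. ereal (u n / real n)) \<longlonglongrightarrow> L)"
proof -
  have e0: "(\<lambda>n. ereal ((w (Suc n) - u n) / real (Suc n))) \<longlonglongrightarrow> 0"
    and e1: "(\<lambda>n. ereal ((u n - w (Suc n)) / real (Suc n))) \<longlonglongrightarrow> 0"
  proof -
    have lim: "(\<lambda>n. K / real (Suc n)) \<longlonglongrightarrow> 0"
      using LIMSEQ_Suc[OF lim_const_over_n[of K]] by simp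
    have "(\<lambda>n. (w (Suc n) - u n) / real (Suc n)) \<longlonglongrightarrow> 0"
      by (rule Lim_null_comparison[OF _ lim]) (auto intro!: always_eventually simp: K divide_right_mono)
    then show "(\<lambda>n. ereal ((w (Suc n) - u n) / real (Suc n))) \<longlonglongrightarrow> 0"
      using tendsto_ereal zero_ereal_def by metis
    have "(\<lambda>n. (u n - w (Suc n)) / real (Suc n)) \<longlonglongrightarrow> 0"
      by (rule Lim_null_comparison[OF _ lim]) (auto intro!: always_eventually divide_right_mono simp: K abs_minus_commute[of "u _"])
    then show "(\<lambda>n. ereal ((u n - w (Suc n)) / real (Suc n))) \<longlonglongrightarrow> 0"
      using tendsto_ereal zero_ereal_def by metis
  qed
  have r1: "(\<lambda>n. ereal (real n / real (Suc n))) \<longlonglongrightarrow> 1"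
    using tendsto_ereal[OF LIMSEQ_n_over_Suc_n] by (simp add: one_ereal_def)
  have r2: "(\<lambda>n. ereal (real (Suc n) / real n)) \<longlonglongrightarrow> 1"
    using tendsto_ereal[OF LIMSEQ_Suc_n_over_n] by (simp add: one_ereal_def)
  have shiftw: "((\<lambda>n. ereal (w n / real n)) \<longlonglongrightarrow> L) \<longleftrightarrow> ((\<lambda>n. ereal (w (Suc n) / real (Suc n))) \<longlonglongrightarrow> L)"
    using filterlim_sequentially_Suc[of "\<lambda>n. ereal (w n / real n)"] by simp
  show ?thesis
  proof
    assume "(\<lambda>n. ereal (w n / real n)) \<longlonglongrightarrow> L"
    then have d: "(\<lambda>n. ereal (w (Suc n) / real (Suc n))) \<longlonglongrightarrow> L" using shiftw by simp
    have "(\<lambda>n. ereal (w (Suc n) / real (Suc n)) + ereal ((u n - w (Suc n)) / real (Suc n))) \<longlonglongrightarrow> L + 0"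
      by (rule tendsto_add_ereal_general1[OF _ d e1]) simp
    then have c: "(\<lambda>n. ereal (u n / real (Suc n))) \<longlonglongrightarrow> L"
      by (simp add: diff_divide_distrib)
    have "(\<lambda>n. ereal (u n / real (Suc n)) * ereal (real (Suc n) / real n)) \<longlonglongrightarrow> L * 1"
      by (rule tendsto_mult_ereal[OF c r2]) simp
    then have "(\<lambda>n. ereal (u n / real (Suc n)) * ereal (real (Suc n) / real n)) \<longlonglongrightarrow> L" by simp
    then show "(\<lambda>n. ereal (u n / real n)) \<longlonglongrightarrow> L"
    proof (rule Lim_transform_eventually)
      show "\<forall>\<^sub>F n in sequentially. ereal (u n / real (Suc n)) * ereal (real (Suc n) / real n) = ereal (u n / real n)"
        using eventually_gt_at_top[of "0::nat"] by eventually_elim (simp del: of_nat_Suc)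
    qed
  next
    assume b: "(\<lambda>n. ereal (u n / real n)) \<longlonglongrightarrow> L"
    have "(\<lambda>n. ereal (u n / real n) * ereal (real n / real (Suc n))) \<longlonglongrightarrow> L * 1"
      by (rule tendsto_mult_ereal[OF b r1]) simp
    then have "(\<lambda>n. ereal (u n / real n) * ereal (real n / real (Suc n))) \<longlonglongrightarrow> L" by simp
    then have c: "(\<lambda>n. ereal (u n / real (Suc n))) \<longlonglongrightarrow> L"
    proof (rule Lim_transform_eventually)
      show "\<forall>\<^sub>F n in sequentially. ereal (u n / real n) * ereal (real n / real (Suc n)) = ereal (u n / real (Suc n))"
        using eventually_gt_at_top[of "0::nat"] by eventually_elim (simp del: of_nat_Suc)
    qed
    have "(\<lambda>n. ereal (u n / real (Suc n)) + ereal ((w (Suc n) - u n) / real (Suc n))) \<longlonglongrightarrow> L + 0"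
      by (rule tendsto_add_ereal_general1[OF _ c e0]) simp
    then have "(\<lambda>n. ereal (w (Suc n) / real (Suc n))) \<longlonglongrightarrow> L"
      by (simp add: diff_divide_distrib)
    then show "(\<lambda>n. ereal (w n / real n)) \<longlonglongrightarrow> L" using shiftw by simp
  qed
qed

lemma iso_norm:
  fixes M :: "real^'k^'d"
  assumes "transpose M ** M = mat 1"
  shows "norm (M *v x) = norm x"
proof -
  have "(M *v x) \<bullet> (M *v x) = ((M *v x) v* M) \<bullet> x"
    by (simp add: dot_lmul_matrix)
  also have "(M *v x) v* M = (transpose M ** M) *v x"
    by (simp add: transpose_matrix_vector[symmetric] matrix_vector_mul_assoc)
  finally have "(M *v x) \<bullet> (M *v x) = x \<bullet> x" using assms by simp
  then show ?thesis by (simp add: norm_eq_sqrt_inner)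
qed

lemma proj_id:
  fixes M :: "real^'k^'d" and A :: "real^'d^'d"
  assumes "transpose M ** M = mat 1" "range ((*v) M) = range ((*v) A)"
  shows "M ** transpose M ** A = A"
proof (subst matrix_eq, intro allI)
  fix x
  have "A *v x \<in> range ((*v) M)" using assms(2) by auto
  then obtain y where y: "A *v x = M *v y" by auto
  have "(M ** transpose M ** A) *v x = M *v (transpose M *v (A *v x))"
    by (simp add: matrix_vector_mul_assoc matrix_mul_assoc)
  also have "\<dots> = M *v ((transpose M ** M) *v y)" by (simp add: y matrix_vector_mul_assoc)
  also have "\<dots> = A *v x" using assms(1) y by simp
  finally show "(M ** transpose M ** A) *v x = A *v x" .
qed

definition infV :: "real^'n^'m \<Rightarrow> (real^'n) set \<Rightarrow> real" where
  "infV B V = Inf {norm (B *v v) | v. v \<in> V \<and> norm v = 1}"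

lemma sing_val_alt: "sing_val i B = Sup {infV B V | V. subspace V \<and> dim V = i}"
  by (simp add: sing_val_def infV_def)

lemma unit_in:
  fixes V :: "(real^'n) set"
  assumes "subspace V" "dim V \<ge> 1"
  shows "\<exists>v\<in>V. norm v = 1"
proof -
  have "\<not> V \<subseteq> {0}"
  proof
    assume "V \<subseteq> {0}"
    then have "dim V = 0" using dim_eq_0[of V] by blast
    then show False using assms(2) by linarith
  qed
  then obtain v where v: "v \<in> V" "v \<noteq> 0" by auto
  then have "v /\<^sub>R norm v \<in> V" using assms(1) by (simp add: subspace_scale)
  moreover have "norm (v /\<^sub>R norm v) = 1" using v by simp
  ultimately show ?thesis by blast
qed

lemma infV_le: "v \<in> V \<Longrightarrow> norm v = 1 \<Longrightarrow> infV B V \<le> norm (B *v v)"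
  unfolding infV_def by (rule cInf_lower) (auto intro: bdd_belowI[of _ 0])

lemma infV_ge:
  fixes B :: "real^'n^'m"
  assumes "subspace V" "dim V \<ge> 1" "\<And>v. v \<in> V \<Longrightarrow> norm v = 1 \<Longrightarrow> t \<le> norm (B *v v)"
  shows "t \<le> infV B V"
  unfolding infV_def using unit_in[OF assms(1,2)] assms(3) by (intro cInf_greatest) auto

lemma infV_nonneg:
  fixes B :: "real^'n^'m"
  assumes "subspace V" "dim V \<ge> 1"
  shows "0 \<le> infV B V"
  using infV_ge[OF assms, of 0 B] by simp

lemma sing_bdd:
  fixes B :: "real^'n^'m"
  assumes "1 \<le> i"
  shows "bdd_above {infV B V | V. subspace V \<and> dim V = i}"
proof -
  obtain K where K: "\<And>x. norm (B *v x) \<le> K * norm x"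
    using linear_bounded[OF matrix_vector_mul_linear[of B]] by blast
  have *: "infV B V \<le> K" if V: "subspace V" "dim V = i" for V :: "(real^'n) set"
  proof -
    obtain v where "v \<in> V" "norm v = 1" using unit_in[of V] V assms by auto
    then show "infV B V \<le> K" using infV_le[of v V B] K[of v] by simp
  qed
  show ?thesis by (rule bdd_aboveI[where M=K]) (use * in blast)
qed

lemma sing_upper:
  fixes B :: "real^'n^'m"
  assumes "subspace V" "dim V = i" "1 \<le> i"
  shows "infV B V \<le> sing_val i B"
  unfolding sing_val_alt by (rule cSup_upper) (use assms sing_bdd[OF assms(3)] in auto)

lemma dim_UNIV_cart: "dim (UNIV :: (real^'n) set) = CARD('n)"
  by simp

lemma sing_least:
  fixes B :: "real^'n^'m"
  assumes "1 \<le> i" "i \<le> CARD('n)" "\<And>V. subspace V \<Longrightarrow> dim V = i \<Longrightarrow> infV B V \<le> t"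
  shows "sing_val i B \<le> t"
proof -
  obtain T :: "(real^'n) set" where "subspace T" "dim T = i"
    using choose_subspace_of_subspace[of i "UNIV :: (real^'n) set"] assms(2) by auto
  then show ?thesis unfolding sing_val_alt using assms(3) by (intro cSup_least) auto
qed

lemma sing_nonneg:
  fixes B :: "real^'n^'m"
  assumes "1 \<le> i" "i \<le> CARD('n)"
  shows "0 \<le> sing_val i B"
proof -
  obtain T :: "(real^'n) set" where "subspace T" "dim T = i"
    using choose_subspace_of_subspace[of i "UNIV :: (real^'n) set"] assms(2) by auto
  then show ?thesis using infV_nonneg[of T B] sing_upper[of T i B] assms by auto
qed

lemma sing_iso:
  fixes M :: "real^'k^'d" and B :: "real^'n^'k"
  assumes "transpose M ** M = mat 1"
  shows "sing_val i (M ** B) = sing_val i B"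
  unfolding sing_val_def by (simp add: matrix_vector_mul_assoc[symmetric] iso_norm[OF assms])


lemma sing_right_upper:
  fixes B :: "real^'n^'m" and N :: "real^'p^'n"
  assumes i: "1 \<le> i" "i \<le> CARD('p)" "i \<le> CARD('n)"
    and c: "0 < c" "\<And>x. norm (N *v x) \<le> c * norm x"
  shows "sing_val i (B ** N) \<le> c * sing_val i B"
proof (rule sing_least[OF i(1,2)])
  fix V :: "(real^'p) set" assume V: "subspace V" "dim V = i"
  show "infV (B ** N) V \<le> c * sing_val i B"
  proof (cases "inj_on ((*v) N) V")
    case True
    let ?V' = "(*v) N ` V"
    have sub: "subspace ?V'" by (rule linear_subspace_image[OF matrix_vector_mul_linear V(1)])
    have dimV': "dim ?V' = i"
    proof -
      have "span V = V" using V(1) span_eq_iff by blast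
      then have "inj_on ((*v) N) (span V)" using True by metis
      from dim_image_eq[OF matrix_vector_mul_linear this] show ?thesis using V by simp
    qed
    have "infV (B ** N) V / c \<le> infV B ?V'"
    proof (rule infV_ge[OF sub])
      show "1 \<le> dim ?V'" using dimV' i by simp
      fix w assume w: "w \<in> ?V'" "norm w = 1"
      then obtain v0 where v0: "v0 \<in> V" "w = N *v v0" by auto
      have "v0 \<noteq> 0" using w v0 by auto
      then have nv0: "norm v0 > 0" by simp
      define v where "v = v0 /\<^sub>R norm v0"
      have v: "v \<in> V" "norm v = 1" using v0 nv0 V(1) by (auto simp: v_def subspace_scale)
      have "(B ** N) *v v = (1 / norm v0) *\<^sub>R (B *v w)"
        by (simp add: v_def v0 matrix_vector_mul_assoc[symmetric] matrix_vector_mult_scaleR divide_inverse_commute)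
      then have eq: "norm ((B ** N) *v v) = norm (B *v w) / norm v0" by simp
      have "1 \<le> c * norm v0" using c(2)[of v0] w v0 by simp
      then have "1 / norm v0 \<le> c" using nv0 by (simp add: field_simps)
      then have "norm (B *v w) / norm v0 \<le> c * norm (B *v w)"
        using mult_right_mono[of "1 / norm v0" c "norm (B *v w)"] by simp
      then have "infV (B ** N) V \<le> c * norm (B *v w)" using infV_le[OF v, of "B ** N"] eq by simp
      then show "infV (B ** N) V / c \<le> norm (B *v w)" using c(1) by (simp add: field_simps)
    qed
    then have "infV (B ** N) V \<le> c * infV B ?V'" using c(1) by (simp add: field_simps)
    also have "\<dots> \<le> c * sing_val i B"
      using sing_upper[OF sub dimV' i(1), of B] c(1) by simp
    finally show ?thesis .
  next
    case False
    then obtain v0 where v0: "v0 \<in> V" "N *v v0 = 0" "v0 \<noteq> 0"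
      using linear_inj_on_iff_eq_0[OF matrix_vector_mul_linear V(1)] by blast
    define v where "v = v0 /\<^sub>R norm v0"
    have v: "v \<in> V" "norm v = 1" using v0 V(1) by (auto simp: v_def subspace_scale)
    have "(B ** N) *v v = 0"
      by (simp add: v_def v0 matrix_vector_mul_assoc[symmetric] matrix_vector_mult_scaleR)
    then have "infV (B ** N) V \<le> 0" using infV_le[OF v, of "B ** N"] by simp
    also have "0 \<le> c * sing_val i B" using sing_nonneg[OF i(1,3), of B] c(1) by simp
    finally show ?thesis .
  qed
qed

lemma sing_right_lower:
  fixes B :: "real^'n^'m" and N :: "real^'p^'n" and P :: "real^'n^'p"
  assumes i: "1 \<le> i" "i \<le> CARD('n)" "i \<le> CARD('p)"
    and c: "0 < c" "\<And>x. norm (P *v x) \<le> c * norm x" and NP: "N ** P = mat 1"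
  shows "sing_val i B \<le> c * sing_val i (B ** N)"
proof (rule sing_least[OF i(1,2)])
  fix W :: "(real^'n) set" assume W: "subspace W" "dim W = i"
  let ?V = "(*v) P ` W"
  have NPx: "N *v (P *v x) = x" for x using NP by (simp add: matrix_vector_mul_assoc)
  have inj: "inj_on ((*v) P) (span W)" by (metis NPx inj_onI)
  have sub: "subspace ?V" by (rule linear_subspace_image[OF matrix_vector_mul_linear W(1)])
  have dimV: "dim ?V = i"
    using dim_image_eq[OF matrix_vector_mul_linear inj] W by simp
  have "infV B W / c \<le> infV (B ** N) ?V"
  proof (rule infV_ge[OF sub])
    show "1 \<le> dim ?V" using dimV i by simp
    fix v assume v: "v \<in> ?V" "norm v = 1"
    then obtain w where w: "w \<in> W" "v = P *v w" by auto
    have "w \<noteq> 0" using v w by auto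
    then have nw: "norm w > 0" by simp
    have Nv: "(B ** N) *v v = B *v w" by (simp add: w NPx matrix_vector_mul_assoc[symmetric])
    have u: "w /\<^sub>R norm w \<in> W" "norm (w /\<^sub>R norm w) = 1" using w nw W(1) by (auto simp: subspace_scale)
    have "infV B W \<le> norm (B *v (w /\<^sub>R norm w))" by (rule infV_le[OF u])
    also have "\<dots> = norm (B *v w) / norm w"
      by (simp add: matrix_vector_mult_scaleR divide_inverse_commute)
    finally have a: "infV B W \<le> norm (B *v w) / norm w" .
    have "1 \<le> c * norm w" using c(2)[of w] w v by simp
    then have "1 / norm w \<le> c" using nw by (simp add: field_simps)
    then have "norm (B *v w) / norm w \<le> c * norm (B *v w)"
      using mult_right_mono[of "1 / norm w" c "norm (B *v w)"] by simp
    then have "infV B W \<le> c * norm ((B ** N) *v v)" using a Nv by simp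
    then show "infV B W / c \<le> norm ((B ** N) *v v)" using c(1) by (simp add: field_simps)
  qed
  then have "infV B W \<le> c * infV (B ** N) ?V" using c(1) by (simp add: field_simps)
  also have "\<dots> \<le> c * sing_val i (B ** N)"
    using sing_upper[OF sub dimV i(1), of "B ** N"] c(1) by simp
  finally show "infV B W \<le> c * sing_val i (B ** N)" .
qed

lemma sing_pos:
  fixes B :: "real^'n^'n"
  assumes "invertible B" "1 \<le> i" "i \<le> CARD('n)"
  shows "0 < sing_val i B"
proof -
  obtain Bi where Bi: "Bi ** B = mat 1" using assms(1) invertible_left_inverse by blast
  obtain K where K: "0 < K" "\<And>x. norm (Bi *v x) \<le> K * norm x"
    using linear_bounded_pos[OF matrix_vector_mul_linear[of Bi]] by blast
  obtain T :: "(real^'n) set" where T: "subspace T" "dim T = i"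
    using choose_subspace_of_subspace[of i "UNIV :: (real^'n) set"] assms(3) by auto
  have "1 / K \<le> infV B T"
  proof (rule infV_ge[OF T(1)])
    show "1 \<le> dim T" using T assms by simp
    fix v assume v: "v \<in> T" "norm v = 1"
    have "v = Bi *v (B *v v)" using Bi by (simp add: matrix_vector_mul_assoc)
    then have "1 \<le> K * norm (B *v v)" using K(2)[of "B *v v"] v by simp
    then show "1 / K \<le> norm (B *v v)" using K(1) by (simp add: field_simps)
  qed
  moreover have "infV B T \<le> sing_val i B" using sing_upper[OF T assms(2)] .
  moreover have "0 < 1 / K" using K by simp
  ultimately show ?thesis by linarith
qed


lemma matE_row:
  fixes B :: "real^'d^'d" and x :: "real^'k"
  shows "((B ** (\<chi> r c. if r = g c then 1 else 0)) *v x) $ r = (\<Sum>c\<in>UNIV. B$r$(g c) * x$c)"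
proof -
  have "(B ** (\<chi> r c. if r = g c then 1 else (0::real))) $ r $ c = B$r$(g c)" for c
    by (simp add: matrix_matrix_mult_def if_distrib[of "\<lambda>z. B $ r $ _ * z"] cong: if_cong)
  then show ?thesis by (simp add: matrix_vector_mult_def)
qed

lemma minor_zero_of_rank:
  fixes B :: "real^('d::{finite,linorder})^('d::{finite,linorder})"
  assumes r: "rank B < CARD('k::finite)" and J: "card J = CARD('k)"
  shows "minor CARD('k) B I J = 0"
proof -
  let ?k = "CARD('k)"
  define js where "js = sorted_list_of_set J"
  define rs where "rs = sorted_list_of_set I"
  obtain h :: "'k \<Rightarrow> nat" where h: "bij_betw h UNIV {0..<?k}"
    using ex_bij_betw_finite_nat[of "UNIV::'k set"] by auto
  define E where "E = (\<chi> r c. if r = js ! h c then 1 else (0::real))"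
  have "rank (B ** E) \<noteq> ?k" using rank_mul_le_left[of B E] r by simp
  then obtain x where x: "x \<noteq> 0" "(B ** E) *v x = 0"
    using matrix_nonfull_linear_equations_eq by blast
  define v where "v b = x $ inv_into UNIV h b" for b
  have inj: "inj h" using h bij_betw_imp_inj_on by blast
  have sum_eq: "(\<Sum>c\<in>UNIV. f (h c) * x$c) = (\<Sum>b<?k. f b * v b)" for f :: "nat \<Rightarrow> real"
  proof -
    have "(\<Sum>c\<in>UNIV. f (h c) * x$c) = (\<Sum>c\<in>UNIV. f (h c) * v (h c))"
      by (simp add: v_def inv_into_f_f[OF inj])
    also have "\<dots> = (\<Sum>b\<in>{0..<?k}. f b * v b)"
      by (rule sum.reindex_bij_betw[OF h])
    finally show ?thesis by (simp add: atLeast0LessThan)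
  qed
  obtain c0 where c0: "x $ c0 \<noteq> 0" using x(1) by (auto simp: Finite_Cartesian_Product.vec_eq_iff)
  have b0: "h c0 < ?k" "v (h c0) \<noteq> 0"
    using h c0 by (auto simp: v_def inv_into_f_f[OF inj] bij_betw_def)
  have rows: "\<forall>a<?k. (\<Sum>b<?k. B $ (rs ! a) $ (js ! b) * v b) = 0"
  proof (intro allI impI)
    fix a assume "a < ?k"
    have "((B ** E) *v x) $ (rs ! a) = (\<Sum>c\<in>UNIV. B $ (rs ! a) $ (js ! h c) * x$c)"
      unfolding E_def by (rule matE_row)
    then show "(\<Sum>b<?k. B $ (rs ! a) $ (js ! b) * v b) = 0"
      using x(2) sum_eq[of "\<lambda>b. B $ (rs ! a) $ (js ! b)"] by simp
  qed
  show ?thesis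
    unfolding minor_def rs_def[symmetric] js_def[symmetric]
    by (rule leibniz_zero[OF rows b0])
qed

lemma range_mult: "range ((*v) (X ** Y)) = (*v) X ` range ((*v) Y)"
proof -
  have "(*v) (X ** Y) = (*v) X \<circ> (*v) Y" by (auto simp: matrix_vector_mul_assoc)
  then show ?thesis by (simp add: image_comp)
qed

lemma Cinv:
  fixes A :: "nat \<Rightarrow> real^('d::{finite,linorder})^('d::{finite,linorder})" and M :: "nat \<Rightarrow> real^'k^('d::{finite,linorder})"
  assumes Mi: "transpose (M i) ** M i = mat 1" "range ((*v) (M i)) = range ((*v) (A i))"
      and Mj: "range ((*v) (M j)) = range ((*v) (A j))"
      and pos: "ext_pow_norm CARD('k) (A i ** A j) > 0"
  shows "invertible (Cmat A M i j)"
proof (rule ccontr)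
  assume ni: "\<not> invertible (Cmat A M i j)"
  then obtain y where y: "y \<noteq> 0" "Cmat A M i j *v y = 0"
    using invertible_left_inverse matrix_left_invertible_ker by metis
  let ?z = "A i *v (M j *v y)"
  have "?z \<in> range ((*v) (M i))" using Mi(2) by auto
  then obtain t where t: "?z = M i *v t" by auto
  have "Cmat A M i j *v y = transpose (M i) *v ?z" by (simp add: Cmat_def matrix_vector_mul_assoc matrix_mul_assoc)
  also have "\<dots> = t" using t Mi(1) by (simp add: matrix_vector_mul_assoc)
  finally have "t = 0" using y by simp
  then have "(A i ** M j) *v y = 0" using t by (simp add: matrix_vector_mul_assoc[symmetric])
  then have "rank (A i ** M j) \<noteq> CARD('k)" using y matrix_nonfull_linear_equations_eq by blast
  then have r1: "rank (A i ** M j) < CARD('k)" using rank_bound[of "A i ** M j"] by linarith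
  have "range ((*v) (A i ** A j)) = range ((*v) (A i ** M j))"
    by (simp add: range_mult Mj)
  then have r2: "rank (A i ** A j) < CARD('k)" using r1 by (simp add: rank_dim_range)
  have z: "minor CARD('k) (A i ** A j) I J = 0" if "card J = CARD('k)" for I J
    by (rule minor_zero_of_rank[OF r2 that])
  have "ext_pow_norm CARD('k) (A i ** A j) = 0"
    unfolding ext_pow_norm_def ext_pow_def by (simp add: z)
  then show False using pos by simp
qed


lemma shift_pow: "(shift ^^ n) \<omega> = (\<lambda>j. \<omega> (j + n))"
  by (induction n) (auto simp: shift_def)

lemma invertible_mat1: "invertible (mat 1 :: real^'n^'n)"
  by (auto simp: invertible_def intro!: exI[of _ "mat 1"])

lemma seq_equiv:
  fixes A :: "nat \<Rightarrow> real^('d::{finite,linorder})^('d::{finite,linorder})"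
    and M :: "nat \<Rightarrow> real^'k^('d::{finite,linorder})"
  assumes Mp: "\<forall>i\<in>{1..m}. transpose (M i) ** M i = mat 1 \<and>
            range (\<lambda>v. M i *v v) = range (\<lambda>v. A i *v v)"
    and inv: "\<forall>i\<in>{1..m}. \<forall>j\<in>{1..m}. invertible (Cmat A M i j)"
    and \<omega>: "\<forall>n. \<omega> n \<in> {1..m}"
    and i: "1 \<le> i" "i \<le> CARD('k)" and kd: "CARD('k) \<le> CARD('d)"
  shows "((\<lambda>n. ln_ereal (sing_val i (cocycle_iter (\<lambda>\<omega>. A (\<omega> 0)) n \<omega>)) / ereal (real n)) \<longlonglongrightarrow> L)
     \<longleftrightarrow> ((\<lambda>n. ln_ereal (sing_val i (cocycle_iter (\<lambda>\<omega>. Cmat A M (\<omega> 1) (\<omega> 0)) n \<omega>)) / ereal (real n)) \<longlonglongrightarrow> L)"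
proof -
  define Ak where "Ak n = cocycle_iter (\<lambda>\<omega>. A (\<omega> 0)) n \<omega>" for n
  define Ck where "Ck n = cocycle_iter (\<lambda>\<omega>. Cmat A M (\<omega> 1) (\<omega> 0)) n \<omega>" for n
  define N0 where "N0 = transpose (M (\<omega> 0)) ** A (\<omega> 0)"
  have Mp': "transpose (M j) ** M j = mat 1" "range ((*v) (M j)) = range ((*v) (A j))"
    if "j \<in> {1..m}" for j using Mp that by auto
  have AM: "A a ** M b = M a ** Cmat A M a b" if "a \<in> {1..m}" for a b
    using proj_id[OF Mp'[OF that]] by (simp add: Cmat_def matrix_mul_assoc)
  have Ak_eq: "Ak (Suc n) = M (\<omega> n) ** Ck n ** N0" for n
  proof (induction n)
    case 0
    show ?case using proj_id[OF Mp'[OF \<omega>[rule_format, of 0]]]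
      by (simp add: Ak_def Ck_def N0_def matrix_mul_assoc)
  next
    case (Suc n)
    have "Ak (Suc (Suc n)) = A (\<omega> (Suc n)) ** Ak (Suc n)"
      by (simp add: Ak_def shift_pow shift_def)
    also have "\<dots> = (A (\<omega> (Suc n)) ** M (\<omega> n)) ** Ck n ** N0"
      by (simp add: Suc matrix_mul_assoc)
    also have "\<dots> = M (\<omega> (Suc n)) ** (Cmat A M (\<omega> (Suc n)) (\<omega> n) ** Ck n) ** N0"
      by (simp add: AM[OF \<omega>[rule_format]] matrix_mul_assoc)
    also have "Cmat A M (\<omega> (Suc n)) (\<omega> n) ** Ck n = Ck (Suc n)"
      by (simp add: Ck_def shift_pow shift_def)
    finally show ?case .
  qed
  have Ck_inv: "invertible (Ck n)" for n
  proof (induction n)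
    case 0 then show ?case by (simp add: Ck_def invertible_mat1)
  next
    case (Suc n)
    have "Ck (Suc n) = Cmat A M (\<omega> (Suc n)) (\<omega> n) ** Ck n" by (simp add: Ck_def shift_pow shift_def)
    then show ?case using invertible_mult Suc inv \<omega> by metis
  qed
  obtain c1 where c1: "0 < c1" "\<And>x. norm (N0 *v x) \<le> c1 * norm x"
    using linear_bounded_pos[OF matrix_vector_mul_linear[of N0]] by blast
  have "surj ((*v) N0)"
  proof -
    have "y \<in> range ((*v) N0)" for y
    proof -
      have "M (\<omega> 0) *v y \<in> range ((*v) (M (\<omega> 0)))" by auto
      then have "M (\<omega> 0) *v y \<in> range ((*v) (A (\<omega> 0)))" using Mp'(2)[OF \<omega>[rule_format, of 0]] by simp
      then obtain x where x: "M (\<omega> 0) *v y = A (\<omega> 0) *v x" by auto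
      have "N0 *v x = transpose (M (\<omega> 0)) *v (A (\<omega> 0) *v x)"
        by (simp add: N0_def matrix_vector_mul_assoc)
      also have "\<dots> = y" using Mp'(1)[OF \<omega>[rule_format]] 
        by (simp add: x[symmetric] matrix_vector_mul_assoc)
      finally show ?thesis by (metis rangeI)
    qed
    then show ?thesis by auto
  qed
  then obtain P where P: "N0 ** P = mat 1" using matrix_right_invertible_surjective by blast
  obtain c2 where c2: "0 < c2" "\<And>x. norm (P *v x) \<le> c2 * norm x"
    using linear_bounded_pos[OF matrix_vector_mul_linear[of P]] by blast
  have id: "i \<le> CARD('d)" using i kd by simp
  have sA: "sing_val i (Ak (Suc n)) = sing_val i (Ck n ** N0)" for n
    by (simp add: Ak_eq matrix_mul_assoc[symmetric] sing_iso[OF Mp'(1)[OF \<omega>[rule_format]]])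
  have up: "sing_val i (Ak (Suc n)) \<le> c1 * sing_val i (Ck n)" for n
    using sing_right_upper[OF i(1) id i(2) c1] sA by simp
  have lo: "sing_val i (Ck n) \<le> c2 * sing_val i (Ak (Suc n))" for n
    using sing_right_lower[OF i(1) i(2) id c2 P] sA by simp
  have posC: "0 < sing_val i (Ck n)" for n using sing_pos[OF Ck_inv i] .
  have posA: "0 < sing_val i (Ak (Suc n))" for n
  proof -
    have "0 < c2 * sing_val i (Ak (Suc n))" using lo[of n] posC[of n] by linarith
    then show ?thesis using c2(1) by (simp add: zero_less_mult_iff)
  qed
  define u where "u n = ln (sing_val i (Ck n))" for n
  define w where "w n = ln (sing_val i (Ak n))" for n
  have K: "\<bar>w (Suc n) - u n\<bar> \<le> \<bar>ln c1\<bar> + \<bar>ln c2\<bar>" for n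
  proof -
    have "w (Suc n) \<le> ln (c1 * sing_val i (Ck n))"
      unfolding w_def using up[of n] posA[of n] c1(1) posC[of n] by simp
    also have "\<dots> = ln c1 + u n" using c1(1) posC[of n] by (simp add: u_def ln_mult)
    finally have a: "w (Suc n) \<le> ln c1 + u n" .
    have "u n \<le> ln (c2 * sing_val i (Ak (Suc n)))"
      unfolding u_def using lo[of n] posA[of n] c2(1) posC[of n] by simp
    also have "\<dots> = ln c2 + w (Suc n)" using c2(1) posA[of n] by (simp add: w_def ln_mult)
    finally have b: "u n \<le> ln c2 + w (Suc n)" .
    show ?thesis using a b by (simp add: abs_le_iff) linarith
  qed
  have eqA: "\<forall>\<^sub>F n in sequentially. ln_ereal (sing_val i (Ak n)) / ereal (real n) = ereal (w n / real n)"
    using eventually_gt_at_top[of "0::nat"]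
  proof eventually_elim
    case (elim n)
    then obtain n' where n: "n = Suc n'" using not0_implies_Suc by blast
    show ?case using posA[of n'] by (simp add: n ln_ereal_def w_def del: of_nat_Suc)
  qed
  have eqC: "\<forall>\<^sub>F n in sequentially. ln_ereal (sing_val i (Ck n)) / ereal (real n) = ereal (u n / real n)"
    using eventually_gt_at_top[of "0::nat"]
  proof eventually_elim
    case (elim n)
    show ?case using posC[of n] elim by (simp add: ln_ereal_def u_def)
  qed
  show ?thesis
    unfolding Ak_def[symmetric] Ck_def[symmetric] tendsto_cong[OF eqA] tendsto_cong[OF eqC]
    by (rule key_ereal[of w u, OF K])
qed

theorem proposition4p5:
  fixes A :: "nat \<Rightarrow> real^('d::{finite,linorder})^('d::{finite,linorder})"
    and M :: "nat \<Rightarrow> real^'k^('d::{finite,linorder})"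
    and p :: "nat pmf" and m :: nat
  assumes "m \<ge> 1"
    and "set_pmf p = {1..m}"
    and "\<forall>j\<in>{1..m}. rank (A j) = CARD('k)"
    and "Theta CARD('k) m A > 0"
    and "\<forall>i\<in>{1..m}. transpose (M i) ** M i = mat 1 \<and>
            range (\<lambda>v. M i *v v) = range (\<lambda>v. A i *v v)"
  shows "(\<forall>i\<in>{1..m}. \<forall>j\<in>{1..m}. invertible (Cmat A M i j))
    \<and> (\<forall>\<omega>. (\<forall>n. \<omega> n \<in> {1..m}) \<longrightarrow> (\<forall>v.
          cocycle (\<lambda>\<omega>. A (\<omega> 0)) (Hmap M (\<omega>, v))
          = Hmap M (cocycle (\<lambda>\<omega>. Cmat A M (\<omega> 1) (\<omega> 0)) (\<omega>, v))))
    \<and> (\<forall>i\<in>{1..CARD('k)}.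
          lyap (bernoulli_measure p) (\<lambda>\<omega>. A (\<omega> 0)) i
          = lyap (bernoulli_measure p) (\<lambda>\<omega>. Cmat A M (\<omega> 1) (\<omega> 0)) i)"
proof -
  note Mp = assms(5)
  have Mp': "transpose (M j) ** M j = mat 1" "range ((*v) (M j)) = range ((*v) (A j))"
    if "j \<in> {1..m}" for j using Mp that by auto
  have pos: "ext_pow_norm CARD('k) (A a ** A b) > 0" if "a \<in> {1..m}" "b \<in> {1..m}" for a b
  proof -
    let ?S = "{ext_pow_norm CARD('k) (A a ** A b) | a b. a \<in> {1..m} \<and> b \<in> {1..m}}"
    have "?S \<subseteq> (\<lambda>(a,b). ext_pow_norm CARD('k) (A a ** A b)) ` ({1..m} \<times> {1..m})" by auto
    then have "finite ?S" by (rule finite_subset) simp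
    then have "Theta CARD('k) m A \<le> ext_pow_norm CARD('k) (A a ** A b)"
      unfolding Theta_def using that by (intro Min_le) auto
    then show ?thesis using assms(4) by linarith
  qed
  have inv: "\<forall>i\<in>{1..m}. \<forall>j\<in>{1..m}. invertible (Cmat A M i j)"
  proof (intro ballI)
    fix i j assume ij: "i \<in> {1..m}" "j \<in> {1..m}"
    show "invertible (Cmat A M i j)"
      by (rule Cinv[OF Mp'(1)[OF ij(1)] Mp'(2)[OF ij(1)] Mp'(2)[OF ij(2)] pos[OF ij]])
  qed
  have conj: "\<forall>\<omega>. (\<forall>n. \<omega> n \<in> {1..m}) \<longrightarrow> (\<forall>v.
          cocycle (\<lambda>\<omega>. A (\<omega> 0)) (Hmap M (\<omega>, v))
          = Hmap M (cocycle (\<lambda>\<omega>. Cmat A M (\<omega> 1) (\<omega> 0)) (\<omega>, v)))"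
  proof (intro allI impI)
    fix \<omega> :: "nat \<Rightarrow> nat" and v assume \<omega>: "\<forall>n. \<omega> n \<in> {1..m}"
    have "M (\<omega> 1) *v (Cmat A M (\<omega> 1) (\<omega> 0) *v v)
        = (M (\<omega> 1) ** transpose (M (\<omega> 1)) ** A (\<omega> 1)) *v (M (\<omega> 0) *v v)"
      by (simp add: Cmat_def matrix_vector_mul_assoc matrix_mul_assoc)
    also have "\<dots> = A (\<omega> 1) *v (M (\<omega> 0) *v v)"
      using proj_id[OF Mp'[OF \<omega>[rule_format, of 1]]] by simp
    finally show "cocycle (\<lambda>\<omega>. A (\<omega> 0)) (Hmap M (\<omega>, v))
          = Hmap M (cocycle (\<lambda>\<omega>. Cmat A M (\<omega> 1) (\<omega> 0)) (\<omega>, v))"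
      by (simp add: cocycle_def Hmap_def shift_def)
  qed
  have kd: "CARD('k) \<le> CARD('d)"
    using rank_bound[of "A 1"] assms(1,3) by auto
  have AEsupp: "AE \<omega> in bernoulli_measure p. \<forall>n. \<omega> n \<in> {1..m}"
    unfolding bernoulli_measure_def AE_all_countable
  proof
    fix n :: nat
    show "AE \<omega> in Pi\<^sub>M UNIV (\<lambda>_. measure_pmf p). \<omega> n \<in> {1..m}"
      by (rule AE_PiM_component[where P="\<lambda>x. x \<in> {1..m}"])
         (auto simp: prob_space_measure_pmf AE_measure_pmf_iff assms(2))
  qed
  have ly: "\<forall>i\<in>{1..CARD('k)}.
          lyap (bernoulli_measure p) (\<lambda>\<omega>. A (\<omega> 0)) i
          = lyap (bernoulli_measure p) (\<lambda>\<omega>. Cmat A M (\<omega> 1) (\<omega> 0)) i"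
  proof
    fix i assume i: "i \<in> {1..CARD('k)}"
    have "(\<lambda>L. AE \<omega> in bernoulli_measure p.
            (\<lambda>n. ln_ereal (sing_val i (cocycle_iter (\<lambda>\<omega>. A (\<omega> 0)) n \<omega>)) / ereal (real n)) \<longlonglongrightarrow> L)
        = (\<lambda>L. AE \<omega> in bernoulli_measure p.
            (\<lambda>n. ln_ereal (sing_val i (cocycle_iter (\<lambda>\<omega>. Cmat A M (\<omega> 1) (\<omega> 0)) n \<omega>)) / ereal (real n)) \<longlonglongrightarrow> L)"
    proof (rule ext)
      fix L
      have H: "AE \<omega> in bernoulli_measure p.
          ((\<lambda>n. ln_ereal (sing_val i (cocycle_iter (\<lambda>\<omega>. A (\<omega> 0)) n \<omega>)) / ereal (real n)) \<longlonglongrightarrow> L)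
          \<longleftrightarrow> ((\<lambda>n. ln_ereal (sing_val i (cocycle_iter (\<lambda>\<omega>. Cmat A M (\<omega> 1) (\<omega> 0)) n \<omega>)) / ereal (real n)) \<longlonglongrightarrow> L)"
        using AEsupp
      proof eventually_elim
        case (elim \<omega>)
        show ?case by (rule seq_equiv[OF Mp inv elim _ _ kd]) (use i in auto)
      qed
      show "(AE \<omega> in bernoulli_measure p.
            (\<lambda>n. ln_ereal (sing_val i (cocycle_iter (\<lambda>\<omega>. A (\<omega> 0)) n \<omega>)) / ereal (real n)) \<longlonglongrightarrow> L)
        = (AE \<omega> in bernoulli_measure p.
            (\<lambda>n. ln_ereal (sing_val i (cocycle_iter (\<lambda>\<omega>. Cmat A M (\<omega> 1) (\<omega> 0)) n \<omega>)) / ereal (real n)) \<longlonglongrightarrow> L)"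
      proof
        assume "AE \<omega> in bernoulli_measure p.
            (\<lambda>n. ln_ereal (sing_val i (cocycle_iter (\<lambda>\<omega>. A (\<omega> 0)) n \<omega>)) / ereal (real n)) \<longlonglongrightarrow> L"
        with H show "AE \<omega> in bernoulli_measure p.
            (\<lambda>n. ln_ereal (sing_val i (cocycle_iter (\<lambda>\<omega>. Cmat A M (\<omega> 1) (\<omega> 0)) n \<omega>)) / ereal (real n)) \<longlonglongrightarrow> L"
          by eventually_elim blast
      next
        assume "AE \<omega> in bernoulli_measure p.
            (\<lambda>n. ln_ereal (sing_val i (cocycle_iter (\<lambda>\<omega>. Cmat A M (\<omega> 1) (\<omega> 0)) n \<omega>)) / ereal (real n)) \<longlonglongrightarrow> L"
        with H show "AE \<omega> in bernoulli_measure p.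
            (\<lambda>n. ln_ereal (sing_val i (cocycle_iter (\<lambda>\<omega>. A (\<omega> 0)) n \<omega>)) / ereal (real n)) \<longlonglongrightarrow> L"
          by eventually_elim blast
      qed
    qed
    then show "lyap (bernoulli_measure p) (\<lambda>\<omega>. A (\<omega> 0)) i
          = lyap (bernoulli_measure p) (\<lambda>\<omega>. Cmat A M (\<omega> 1) (\<omega> 0)) i"
      unfolding lyap_def by simp
  qed
  show ?thesis using inv conj ly by blast
qed

end
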